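(* Let $H$ be a graph with at least one edge and no isolated vertices, and suppose $H$ is not isomorphic to a star $K_{1,m}$ for any $m\ge1$. Let $t\ge1$, and let $C$ be the graph obtained from $\mu_t(H)$ by adding $\ell\ge1$ new vertices, each adjacent only to the root $w$. Then $\det(C)=\det(\mu_t(H))+\ell-1$.
   Context: All graphs are finite and simple. For a graph $G$ with $V(G)=\{v_1,\dots,v_n\}$ and an integer $t\ge1$, the generalized Mycielskian $\mu_t(G)$ has vertex set $\{u_i^s: 1\le i\le n,\ 0\le s\le t\}\cup\{w\}$, where $u_i^0$ is identified with $v_i$. Its edges are: $u_i^0u_j^0$ for each edge $v_iv_j$ of $G$; $u_i^su_j^{s+1}$ and $u_j^su_i^{s+1}$ for each edge $v_iv_j$ of $G$ and each $0\le s<t$; and $u_i^tw$ for all $1\le i\le n$; $w$ is the root. A set $S\subseteq V(G)$ is a determining set for $G$ if the only automorphism of $G$ fixing every vertex of $S$ is the identity; $\det(G)$ is the minimum size of a determining set. *)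

theory Defs
  imports Main
begin

definition graph :: "'a set \<Rightarrow> ('a \<Rightarrow> 'a \<Rightarrow> bool) \<Rightarrow> bool" where
  "graph V E \<longleftrightarrow> finite V \<and> (\<forall>x y. E x y \<longrightarrow> x \<in> V \<and> y \<in> V)
     \<and> (\<forall>x y. E x y \<longrightarrow> E y x) \<and> (\<forall>x. \<not> E x x)"

definition automorphism :: "'a set \<Rightarrow> ('a \<Rightarrow> 'a \<Rightarrow> bool) \<Rightarrow> ('a \<Rightarrow> 'a) \<Rightarrow> bool" where
  "automorphism V E f \<longleftrightarrow> bij_betw f V V \<and> (\<forall>x\<in>V. \<forall>y\<in>V. E (f x) (f y) \<longleftrightarrow> E x y)"

definition determining_set :: "'a set \<Rightarrow> ('a \<Rightarrow> 'a \<Rightarrow> bool) \<Rightarrow> 'a set \<Rightarrow> bool" where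
  "determining_set V E S \<longleftrightarrow> S \<subseteq> V \<and>
     (\<forall>f. automorphism V E f \<and> (\<forall>x\<in>S. f x = x) \<longrightarrow> (\<forall>x\<in>V. f x = x))"

definition determining_number :: "'a set \<Rightarrow> ('a \<Rightarrow> 'a \<Rightarrow> bool) \<Rightarrow> nat" where
  "determining_number V E = Min (card ` {S. determining_set V E S})"

definition has_edge :: "'a set \<Rightarrow> ('a \<Rightarrow> 'a \<Rightarrow> bool) \<Rightarrow> bool" where
  "has_edge V E \<longleftrightarrow> (\<exists>x\<in>V. \<exists>y\<in>V. E x y)"

definition no_isolated :: "'a set \<Rightarrow> ('a \<Rightarrow> 'a \<Rightarrow> bool) \<Rightarrow> bool" where
  "no_isolated V E \<longleftrightarrow> (\<forall>x\<in>V. \<exists>y\<in>V. E x y)"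

definition is_star :: "'a set \<Rightarrow> ('a \<Rightarrow> 'a \<Rightarrow> bool) \<Rightarrow> bool" where
  "is_star V E \<longleftrightarrow> card V \<ge> 2 \<and>
     (\<exists>c\<in>V. \<forall>x\<in>V. \<forall>y\<in>V. E x y \<longleftrightarrow> (x \<noteq> y \<and> (x = c \<or> y = c)))"

text \<open>Vertices of the generalized Mycielskian: U v s stands for u_v^s (U v 0 = v), Root = w.\<close>
datatype 'a myc_vertex = U 'a nat | Root

definition myc_V :: "'a set \<Rightarrow> nat \<Rightarrow> 'a myc_vertex set" where
  "myc_V V t = {U v s | v s. v \<in> V \<and> s \<le> t} \<union> {Root}"

fun myc_E :: "('a \<Rightarrow> 'a \<Rightarrow> bool) \<Rightarrow> nat \<Rightarrow> 'a myc_vertex \<Rightarrow> 'a myc_vertex \<Rightarrow> bool" where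
  "myc_E E t (U x s) (U y r) \<longleftrightarrow>
     E x y \<and> ((s = 0 \<and> r = 0) \<or> (s < t \<and> r = s + 1) \<or> (r < t \<and> s = r + 1))"
| "myc_E E t (U x s) Root \<longleftrightarrow> s = t"
| "myc_E E t Root (U y r) \<longleftrightarrow> r = t"
| "myc_E E t Root Root \<longleftrightarrow> False"

text \<open>The graph C: mu_t(H) plus l new pendant vertices Inr k (k < l), each adjacent only to the root.\<close>
definition pend_V :: "'a set \<Rightarrow> nat \<Rightarrow> nat \<Rightarrow> ('a myc_vertex + nat) set" where
  "pend_V V t l = Inl ` myc_V V t \<union> Inr ` {..<l}"

fun pend_E :: "('a \<Rightarrow> 'a \<Rightarrow> bool) \<Rightarrow> nat \<Rightarrow> nat \<Rightarrow> ('a myc_vertex + nat) \<Rightarrow> ('a myc_vertex + nat) \<Rightarrow> bool" where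
  "pend_E E t l (Inl a) (Inl b) \<longleftrightarrow> myc_E E t a b"
| "pend_E E t l (Inl a) (Inr k) \<longleftrightarrow> a = Root \<and> k < l"
| "pend_E E t l (Inr k) (Inl b) \<longleftrightarrow> b = Root \<and> k < l"
| "pend_E E t l (Inr k) (Inr j) \<longleftrightarrow> False"

end

theory Submission
  imports Defs
begin


definition nb :: "'v set \<Rightarrow> ('v \<Rightarrow> 'v \<Rightarrow> bool) \<Rightarrow> 'v \<Rightarrow> 'v set" where
  "nb W F v = {u \<in> W. F v u}"

lemma aut_nb:
  assumes "automorphism W F f" "v \<in> W"
  shows "f ` nb W F v = nb W F (f v)"
proof
  show "f ` nb W F v \<subseteq> nb W F (f v)"
  proof
    fix u assume "u \<in> f ` nb W F v"
    then obtain u' where u': "u' \<in> W" "F v u'" "u = f u'" unfolding nb_def by auto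
    have "f u' \<in> W" using assms(1) u'(1) unfolding automorphism_def bij_betw_def by blast
    moreover have "F (f v) (f u')" using assms u' unfolding automorphism_def by blast
    ultimately show "u \<in> nb W F (f v)" using u' unfolding nb_def by blast
  qed
next
  show "nb W F (f v) \<subseteq> f ` nb W F v"
  proof
    fix u assume "u \<in> nb W F (f v)"
    then have u: "u \<in> W" "F (f v) u" unfolding nb_def by auto
    then obtain u' where "u' \<in> W" "u = f u'" using assms unfolding automorphism_def bij_betw_def by (metis imageE)
    then show "u \<in> f ` nb W F v" using u assms unfolding automorphism_def nb_def by blast
  qed
qed

lemma aut_inj: "automorphism W F f \<Longrightarrow> inj_on f W"
  unfolding automorphism_def bij_betw_def by auto

lemma aut_in: "automorphism W F f \<Longrightarrow> v \<in> W \<Longrightarrow> f v \<in> W"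
  unfolding automorphism_def bij_betw_def by auto

lemma aut_surj: "automorphism W F f \<Longrightarrow> u \<in> W \<Longrightarrow> \<exists>v\<in>W. u = f v"
  unfolding automorphism_def bij_betw_def by auto

lemma aut_edge: "automorphism W F f \<Longrightarrow> a \<in> W \<Longrightarrow> b \<in> W \<Longrightarrow> F (f a) (f b) = F a b"
  unfolding automorphism_def by auto

lemma nb_sub: "nb W F v \<subseteq> W" unfolding nb_def by auto

lemma aut_card_nb:
  assumes "automorphism W F f" "v \<in> W"
  shows "card (nb W F (f v)) = card (nb W F v)"
proof -
  have "inj_on f (nb W F v)" using inj_on_subset[OF aut_inj[OF assms(1)] nb_sub] .
  then have "card (f ` nb W F v) = card (nb W F v)" by (rule card_image)
  then show ?thesis using aut_nb[OF assms] by simp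
qed

lemma aut_card_int:
  assumes "automorphism W F f" "a \<in> W" "b \<in> W"
  shows "nb W F (f a) \<inter> nb W F (f b) = f ` (nb W F a \<inter> nb W F b)"
    and "card (nb W F (f a) \<inter> nb W F (f b)) = card (nb W F a \<inter> nb W F b)"
proof -
  have i: "inj_on f W" using aut_inj[OF assms(1)] .
  have "f ` (nb W F a \<inter> nb W F b) = f ` nb W F a \<inter> f ` nb W F b"
    by (rule inj_on_image_Int[OF i nb_sub nb_sub])
  also have "\<dots> = nb W F (f a) \<inter> nb W F (f b)"
    using aut_nb[OF assms(1,2)] aut_nb[OF assms(1,3)] by (rule arg_cong2[where f="(\<inter>)"])
  finally show e: "nb W F (f a) \<inter> nb W F (f b) = f ` (nb W F a \<inter> nb W F b)" by (rule sym)
  have s: "nb W F a \<inter> nb W F b \<subseteq> W" using nb_sub[of W F a] by (rule le_infI1)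
  have "inj_on f (nb W F a \<inter> nb W F b)" by (rule inj_on_subset[OF i s])
  then have "card (f ` (nb W F a \<inter> nb W F b)) = card (nb W F a \<inter> nb W F b)" by (rule card_image)
  then show "card (nb W F (f a) \<inter> nb W F (f b)) = card (nb W F a \<inter> nb W F b)"
    by (simp only: e)
qed

definition half_prop :: "'v set \<Rightarrow> ('v \<Rightarrow> 'v \<Rightarrow> bool) \<Rightarrow> 'v \<Rightarrow> bool" where
  "half_prop W F v \<longleftrightarrow> (\<forall>z\<in>W. z \<noteq> v \<longrightarrow> \<not> F v z \<longrightarrow> nb W F z \<inter> nb W F v \<noteq> {} \<longrightarrow>
      2 * card (nb W F z \<inter> nb W F v) = card (nb W F z))"

definition indep_prop :: "'v set \<Rightarrow> ('v \<Rightarrow> 'v \<Rightarrow> bool) \<Rightarrow> 'v \<Rightarrow> bool" where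
  "indep_prop W F v \<longleftrightarrow> (\<forall>a\<in>nb W F v. \<forall>b\<in>nb W F v. \<not> F a b)"

lemma aut_half:
  assumes "automorphism W F f" "v \<in> W" "half_prop W F v"
  shows "half_prop W F (f v)"
  unfolding half_prop_def
proof (intro ballI impI)
  fix z assume z: "z \<in> W" "z \<noteq> f v" "\<not> F (f v) z" "nb W F z \<inter> nb W F (f v) \<noteq> {}"
  obtain z' where z': "z' \<in> W" "z = f z'" using aut_surj[OF assms(1) z(1)] by auto
  have a: "z' \<noteq> v" using z(2) z'(2) by auto
  have b: "\<not> F v z'" using z(3) z'(2) aut_edge[OF assms(1) assms(2) z'(1)] by simp
  have e: "nb W F z \<inter> nb W F (f v) = f ` (nb W F z' \<inter> nb W F v)"
    using aut_card_int(1)[OF assms(1) z'(1) assms(2)] z'(2) by simp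
  have c: "nb W F z' \<inter> nb W F v \<noteq> {}" using z(4) e by auto
  have h: "2 * card (nb W F z' \<inter> nb W F v) = card (nb W F z')"
    using assms(3)[unfolded half_prop_def, rule_format, OF z'(1) a b c] .
  show "2 * card (nb W F z \<inter> nb W F (f v)) = card (nb W F z)"
    using h aut_card_int(2)[OF assms(1) z'(1) assms(2)] aut_card_nb[OF assms(1) z'(1)] z'(2) by simp
qed

lemma aut_indep:
  assumes "automorphism W F f" "v \<in> W" "indep_prop W F v"
  shows "indep_prop W F (f v)"
  unfolding indep_prop_def
proof (intro ballI)
  fix a b assume "a \<in> nb W F (f v)" "b \<in> nb W F (f v)"
  then have "a \<in> f ` nb W F v" "b \<in> f ` nb W F v" using aut_nb[OF assms(1,2)] by simp_all
  then obtain a' b' where ab: "a' \<in> nb W F v" "b' \<in> nb W F v" "a = f a'" "b = f b'"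
    by (auto elim!: imageE)
  have w: "a' \<in> W" "b' \<in> W" using ab(1,2) nb_sub[of W F v] by (auto simp del: )
  have "\<not> F a' b'" using assms(3) ab(1,2) unfolding indep_prop_def by simp
  then show "\<not> F a b" using aut_edge[OF assms(1) w] ab(3,4) by simp
qed



definition lay :: "nat \<Rightarrow> 'a set \<Rightarrow> 'a myc_vertex set" where
  "lay r S = (\<lambda>j. U j r) ` S"

lemma lay_mem[simp]: "U j r' \<in> lay r S \<longleftrightarrow> r' = r \<and> j \<in> S"
  unfolding lay_def by auto

lemma Root_lay[simp]: "Root \<notin> lay r S"
  unfolding lay_def by auto

lemma lay_int[simp]: "lay r S \<inter> lay r' S' = (if r = r' then lay r (S \<inter> S') else {})"
  unfolding lay_def by auto

lemma lay_Root_int[simp]: "lay r S \<inter> {Root} = {}" "{Root} \<inter> lay r S = {}"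
  by auto

lemma card_lay[simp]: "card (lay r S) = card S"
  unfolding lay_def by (rule card_image) (auto simp: inj_on_def)

lemma finite_lay[simp]: "finite (lay r S) \<longleftrightarrow> finite S"
  unfolding lay_def by (auto simp: finite_image_iff inj_on_def)

lemma lay_empty[simp]: "lay r S = {} \<longleftrightarrow> S = {}"
  unfolding lay_def by auto

lemma lay_Un: "lay r S \<union> lay r S' = lay r (S \<union> S')"
  unfolding lay_def by auto

definition nbH :: "('a \<Rightarrow> 'a \<Rightarrow> bool) \<Rightarrow> 'a \<Rightarrow> 'a set" where
  "nbH E k = {j. E k j}"

locale M =
  fixes V :: "'a set" and E :: "'a \<Rightarrow> 'a \<Rightarrow> bool" and t :: nat
  assumes gr: "graph V E" and t1: "t \<ge> 1"
begin

abbreviation "W \<equiv> myc_V V t"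
abbreviation "F \<equiv> myc_E E t"
abbreviation "NB \<equiv> nb W F"

lemma finV: "finite V" using gr unfolding graph_def by auto
lemma Esym: "E x y \<Longrightarrow> E y x" using gr unfolding graph_def by auto
lemma Eirr: "\<not> E x x" using gr unfolding graph_def by auto
lemma EV: "E x y \<Longrightarrow> x \<in> V \<and> y \<in> V" using gr unfolding graph_def by auto

lemma nbH_sub: "nbH E k \<subseteq> V" using EV unfolding nbH_def by auto
lemma fin_nbH[simp]: "finite (nbH E k)" using finV nbH_sub finite_subset by blast
lemma nbH_mem[simp]: "j \<in> nbH E k \<longleftrightarrow> E k j" unfolding nbH_def by simp

lemma W_U[simp]: "U k s \<in> W \<longleftrightarrow> k \<in> V \<and> s \<le> t" unfolding myc_V_def by auto
lemma W_Root[simp]: "Root \<in> W" unfolding myc_V_def by auto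

lemma nb_Root: "NB Root = lay t V"
proof (rule set_eqI)
  fix u show "u \<in> NB Root \<longleftrightarrow> u \<in> lay t V"
    by (cases u) (auto simp: nb_def)
qed

lemma nb_U:
  assumes "k \<in> V" "s \<le> t"
  shows "NB (U k s) = lay (s - 1) (nbH E k) \<union> (if s < t then lay (s + 1) (nbH E k) else {Root})"
proof (rule set_eqI)
  fix u show "u \<in> NB (U k s) \<longleftrightarrow> u \<in> lay (s - 1) (nbH E k) \<union> (if s < t then lay (s + 1) (nbH E k) else {Root})"
  proof (cases u)
    case (U y r)
    have "u \<in> NB (U k s) \<longleftrightarrow> y \<in> V \<and> r \<le> t \<and> E k y \<and> ((s = 0 \<and> r = 0) \<or> (s < t \<and> r = s + 1) \<or> (r < t \<and> s = r + 1))"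
      using U by (simp add: nb_def)
    also have "\<dots> \<longleftrightarrow> E k y \<and> (r = s - 1 \<or> (s < t \<and> r = s + 1))"
      using EV assms t1 by auto
    finally show ?thesis using U by auto
  next
    case Root
    then show ?thesis using assms(2) by (auto simp: nb_def)
  qed
qed

lemma card_nb_Root: "card (NB Root) = card V"
  by (simp add: nb_Root)

lemma card_nb_U:
  assumes "k \<in> V" "s \<le> t"
  shows "card (NB (U k s)) = (if s < t then 2 * card (nbH E k) else card (nbH E k) + 1)"
proof (cases "s < t")
  case True
  have "s - 1 \<noteq> s + 1" by simp
  then have "card (lay (s - 1) (nbH E k) \<union> lay (s + 1) (nbH E k)) = card (nbH E k) + card (nbH E k)"
    by (subst card_Un_disjoint) auto
  then show ?thesis using True nb_U[OF assms] by simp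
next
  case False
  then have "card (lay (s - 1) (nbH E k) \<union> {Root}) = card (nbH E k) + 1"
    by (subst card_Un_disjoint) auto
  then show ?thesis using False nb_U[OF assms] by simp
qed

lemma Fsym: "F a b \<Longrightarrow> F b a"
  by (cases a; cases b) (auto intro: Esym)

lemma half_Root: "half_prop W F Root"
  unfolding half_prop_def
proof (intro ballI impI)
  fix z assume z: "z \<in> W" "z \<noteq> Root" "\<not> F Root z" "NB z \<inter> NB Root \<noteq> {}"
  obtain k s where ks: "z = U k s" using z(2) by (cases z) auto
  have kV: "k \<in> V" and st: "s \<le> t" using z(1) ks by auto
  have "s \<noteq> t" using z(3) ks by auto
  then have slt: "s < t" using st by simp
  have nz: "NB z = lay (s - 1) (nbH E k) \<union> lay (s + 1) (nbH E k)" using nb_U[OF kV st] slt ks by simp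
  have "s - 1 \<noteq> t" using slt by auto
  then have i1: "NB z \<inter> NB Root = (if s + 1 = t then lay t (nbH E k) else {})"
    using nbH_sub[of k] unfolding nz nb_Root by (auto simp: Int_Un_distrib2 Int_absorb2)
  then have "s + 1 = t" using z(4) by (auto split: if_splits)
  then show "2 * card (NB z \<inter> NB Root) = card (NB z)"
    using i1 card_nb_U[OF kV st] slt ks by simp
qed

lemma indep_Root: "indep_prop W F Root"
  unfolding indep_prop_def nb_Root using t1 by (auto simp: lay_def)

end


lemma card_lay2: "a \<noteq> b \<Longrightarrow> finite S \<Longrightarrow> finite S' \<Longrightarrow> card (lay a S \<union> lay b S') = card S + card S'"
  by (subst card_Un_disjoint) auto

lemma card_lay_Root: "finite S \<Longrightarrow> card (lay a S \<union> {Root}) = card S + 1"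
  by (subst card_Un_disjoint) auto

context M begin

lemma card2_star:
  assumes "card V = 2" "i \<in> V" "E i j" shows "is_star V E"
proof -
  have j: "j \<in> V" "j \<noteq> i" using assms EV Eirr by auto
  have "{i, j} \<subseteq> V" using assms j by auto
  moreover have "card {i, j} = 2" using j by simp
  ultimately have Veq: "V = {i, j}" using card_subset_eq[OF finV] assms(1) by metis
  have "\<forall>x\<in>V. \<forall>y\<in>V. E x y \<longleftrightarrow> (x \<noteq> y \<and> (x = i \<or> y = i))"
    unfolding Veq using assms(3) Esym Eirr j(2) by auto
  then show ?thesis unfolding is_star_def using assms(1,2) by auto
qed

lemma dom_star:
  assumes "i \<in> V" "\<forall>j\<in>V. j \<noteq> i \<longrightarrow> E i j" "\<forall>a b. E a b \<longrightarrow> a = i \<or> b = i" "card V \<ge> 2"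
  shows "is_star V E"
proof -
  have "\<forall>x\<in>V. \<forall>y\<in>V. E x y \<longleftrightarrow> (x \<noteq> y \<and> (x = i \<or> y = i))"
    using assms Esym Eirr by metis
  then show ?thesis unfolding is_star_def using assms by auto
qed

lemma card_V2: assumes "has_edge V E" shows "card V \<ge> 2"
proof -
  obtain x y where "x \<in> V" "y \<in> V" "E x y" using assms unfolding has_edge_def by auto
  then have "{x, y} \<subseteq> V" "card {x, y} = 2" using Eirr by (auto simp: card_insert_if)
  then show ?thesis using card_mono[OF finV] by metis
qed

lemma nbH_pos: assumes "no_isolated V E" "k \<in> V" shows "card (nbH E k) \<ge> 1"
proof -
  obtain y where "E k y" using assms unfolding no_isolated_def by auto
  then have "nbH E k \<noteq> {}" by auto
  then show ?thesis using fin_nbH by (simp add: Suc_le_eq card_gt_0_iff)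
qed

end


context M begin

lemma top_case:
  assumes ns: "\<not> is_star V E" and he: "has_edge V E" and ni: "no_isolated V E"
    and iV: "i \<in> V" and deg: "card (nbH E i) + 1 = card V"
    and hx: "half_prop W F (U i t)"
  shows False
proof -
  have sub: "nbH E i \<subseteq> V - {i}" using nbH_sub Eirr by auto
  have "card (V - {i}) = card V - 1" using iV finV by simp
  then have Ni: "nbH E i = V - {i}"
    using card_subset_eq[OF _ sub] finV deg by auto
  have dm: "\<forall>j\<in>V. j \<noteq> i \<longrightarrow> E i j"
  proof (intro ballI impI)
    fix j assume "j \<in> V" "j \<noteq> i"
    then have "j \<in> nbH E i" using Ni by simp
    then show "E i j" by simp
  qed
  have "\<not> (\<forall>a b. E a b \<longrightarrow> a = i \<or> b = i)"
    using dom_star[OF iV dm _ card_V2[OF he]] ns by blast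
  then obtain k k' where kk: "E k k'" "k \<noteq> i" "k' \<noteq> i" by auto
  have kV: "k \<in> V" using kk EV by auto
  have "k \<in> V - {i}" using kV kk(2) by simp
  then have "k \<in> nbH E i" unfolding Ni .
  then have ik: "E i k" by simp
  let ?z = "U k t"
  have zW: "?z \<in> W" using kV by simp
  have zne: "?z \<noteq> U i t" using kk by simp
  have nadj: "\<not> F (U i t) ?z" using t1 by simp
  have nz: "NB ?z = lay (t - 1) (nbH E k) \<union> {Root}" using nb_U[OF kV] by simp
  have nx: "NB (U i t) = lay (t - 1) (nbH E i) \<union> {Root}" using nb_U[OF iV] by simp
  have int: "NB ?z \<inter> NB (U i t) = lay (t - 1) (nbH E k - {i}) \<union> {Root}"
    unfolding nz nx Ni using nbH_sub[of k] by (auto simp: lay_def)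
  have ne: "NB ?z \<inter> NB (U i t) \<noteq> {}" unfolding int by simp
  have h: "2 * card (NB ?z \<inter> NB (U i t)) = card (NB ?z)"
    using hx[unfolded half_prop_def, rule_format, OF zW zne nadj ne] .
  have iin: "i \<in> nbH E k" using ik Esym by simp
  have c1: "card (nbH E k - {i}) = card (nbH E k) - 1" using iin by simp
  have pos: "card (nbH E k) \<ge> 1" using nbH_pos[OF ni kV] .
  have "card (NB ?z \<inter> NB (U i t)) = card (nbH E k)"
    unfolding int using card_lay_Root[of "nbH E k - {i}" "t - 1"] c1 pos by simp
  moreover have "card (NB ?z) = card (nbH E k) + 1" using card_nb_U[OF kV] by simp
  ultimately have "card (nbH E k) = 1" using h by simp
  moreover have "{i, k'} \<subseteq> nbH E k" using iin kk by auto
  then have "card {i, k'} \<le> card (nbH E k)" using card_mono fin_nbH by blast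
  ultimately show False using kk(3) by simp
qed

end


context M begin

lemma low_step:
  assumes ni: "no_isolated V E" and iV: "i \<in> V" and slt: "s < t"
    and hx: "half_prop W F (U i s)" and ix: "indep_prop W F (U i s)"
    and ij: "E i j" and jk: "E j k" and ki: "k \<noteq> i"
  shows False
proof -
  let ?x = "U i s"
  let ?C = "nbH E k \<inter> nbH E i"
  have kV: "k \<in> V" and jV: "j \<in> V" using EV jk by auto
  have st: "s \<le> t" using slt by simp
  have nx: "NB ?x = lay (s - 1) (nbH E i) \<union> lay (s + 1) (nbH E i)" using nb_U[OF iV st] slt by simp
  have jC: "j \<in> ?C" using ij jk Esym by simp
  have cpos: "card ?C \<ge> 1" using jC by (auto simp: Suc_le_eq card_gt_0_iff)
  have HP: "\<And>z. z \<in> W \<Longrightarrow> z \<noteq> ?x \<Longrightarrow> \<not> F ?x z \<Longrightarrow> NB z \<inter> NB ?x \<noteq> {} \<Longrightarrow>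
      2 * card (NB z \<inter> NB ?x) = card (NB z)"
    using hx unfolding half_prop_def by blast
  show False
  proof (cases "s \<le> 1 \<and> E k i")
    case True
    have "U j (s - 1) \<in> NB ?x" "U k (s - 1) \<in> NB ?x" using nx ij True Esym by auto
    moreover have "F (U j (s - 1)) (U k (s - 1))" using True jk by simp
    ultimately show False using ix unfolding indep_prop_def by blast
  next
    case False
    note nki = False
    have z1W: "U k s \<in> W" using kV st by simp
    have z1ne: "U k s \<noteq> ?x" using ki by simp
    have z1na: "\<not> F ?x (U k s)" using nki Esym by auto
    have nz1: "NB (U k s) = lay (s - 1) (nbH E k) \<union> lay (s + 1) (nbH E k)" using nb_U[OF kV st] slt by simp
    have i1: "NB (U k s) \<inter> NB ?x = lay (s - 1) ?C \<union> lay (s + 1) ?C"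
      unfolding nz1 nx by (simp add: Int_Un_distrib Int_Un_distrib2)
    have c1: "card (NB (U k s) \<inter> NB ?x) = 2 * card ?C" unfolding i1 by (subst card_lay2) auto
    have ne1: "NB (U k s) \<inter> NB ?x \<noteq> {}" unfolding i1 using jC by auto
    have "2 * card (NB (U k s) \<inter> NB ?x) = card (NB (U k s))" using HP[OF z1W z1ne z1na ne1] .
    then have dk: "card (nbH E k) = 2 * card ?C" using c1 card_nb_U[OF kV st] slt by simp
    show False
    proof (cases "s + 2 \<le> t")
      case True
      let ?z = "U k (s + 2)"
      have zW: "?z \<in> W" using kV True by simp
      have zne: "?z \<noteq> ?x" by simp
      have zna: "\<not> F ?x ?z" by simp
      have nz: "NB ?z = lay (s + 1) (nbH E k) \<union> (if s + 2 < t then lay (s + 3) (nbH E k) else {Root})"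
        using nb_U[OF kV True] by (simp add: numeral_3_eq_3)
      have iz: "NB ?z \<inter> NB ?x = lay (s + 1) ?C"
        unfolding nz nx by (auto simp: Int_Un_distrib Int_Un_distrib2)
      have ne: "NB ?z \<inter> NB ?x \<noteq> {}" unfolding iz using jC by auto
      have h: "2 * card (NB ?z \<inter> NB ?x) = card (NB ?z)" using HP[OF zW zne zna ne] .
      have "card (NB ?z) = (if s + 2 < t then 2 * card (nbH E k) else card (nbH E k) + 1)"
        using card_nb_U[OF kV True] by simp
      then show False using h iz dk cpos by (simp split: if_splits)
    next
      case False
      note ns2 = False
      show False
      proof (cases "s \<ge> 2")
        case True
        let ?z = "U k (s - 2)"
        have st2: "s - 2 \<le> t" using slt by simp
        have zW: "?z \<in> W" using kV st2 by simp
        have zne: "?z \<noteq> ?x" using ki by simp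
        have zna: "\<not> F ?x ?z" using True by auto
        have nz: "NB ?z = lay (s - 3) (nbH E k) \<union> lay (s - 1) (nbH E k)"
        proof -
          have e1: "s - 2 - 1 = s - 3" "s - 2 + 1 = s - 1" "s - 2 < t" using True slt by auto
          show ?thesis using nb_U[OF kV st2] e1(3) unfolding e1(1,2) by simp
        qed
        have d1: "s - 3 \<noteq> s - 1" "s - 3 \<noteq> s + 1" "s - 1 \<noteq> s + 1" using True by auto
        have iz: "NB ?z \<inter> NB ?x = lay (s - 1) ?C"
          unfolding nz nx using d1 by (auto simp: Int_Un_distrib Int_Un_distrib2)
        have ne: "NB ?z \<inter> NB ?x \<noteq> {}" unfolding iz using jC by auto
        have h: "2 * card (NB ?z \<inter> NB ?x) = card (NB ?z)" using HP[OF zW zne zna ne] .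
        have "card (NB ?z) = 2 * card (nbH E k)" using card_nb_U[OF kV st2] slt by simp
        then show False using h iz dk cpos by simp
      next
        case False
        then have s01: "s = 0 \<or> s = 1" by auto
        have nik: "\<not> E i k" using nki s01 Esym by auto
        show False
        proof (cases "s = 0")
          case True
          then have t1': "t = 1" using ns2 slt by simp
          let ?z = "U k 1"
          have st1: "1 \<le> t" using t1 .
          have zW: "?z \<in> W" using kV t1 by simp
          have zne: "?z \<noteq> ?x" using True by simp
          have zna: "\<not> F ?x ?z" using True nik by simp
          have nz: "NB ?z = lay 0 (nbH E k) \<union> {Root}" using nb_U[OF kV st1] t1' by simp
          have nx': "NB ?x = lay 0 (nbH E i) \<union> lay 1 (nbH E i)" using nx True by simp
          have iz: "NB ?z \<inter> NB ?x = lay 0 ?C"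
            unfolding nz nx' by (auto simp: Int_Un_distrib Int_Un_distrib2)
          have ne: "NB ?z \<inter> NB ?x \<noteq> {}" unfolding iz using jC by auto
          have h: "2 * card (NB ?z \<inter> NB ?x) = card (NB ?z)" using HP[OF zW zne zna ne] .
          have "card (NB ?z) = card (nbH E k) + 1" using card_nb_U[OF kV st1] t1' by simp
          then show False using h iz dk by simp
        next
          case False
          then have s1: "s = 1" using s01 by simp
          then have t2: "t = 2" using ns2 slt by simp
          let ?z = "U k 0"
          have st0: "0 \<le> t" by simp
          have zW: "?z \<in> W" using kV by simp
          have zne: "?z \<noteq> ?x" using s1 by simp
          have zna: "\<not> F ?x ?z" using s1 nik by simp
          have nz: "NB ?z = lay 0 (nbH E k) \<union> lay 1 (nbH E k)" using nb_U[OF kV st0] t2 by simp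
          have nx': "NB ?x = lay 0 (nbH E i) \<union> lay 2 (nbH E i)" using nx s1 by (simp add: numeral_2_eq_2)
          have iz: "NB ?z \<inter> NB ?x = lay 0 ?C"
            unfolding nz nx' by (auto simp: Int_Un_distrib Int_Un_distrib2)
          have ne: "NB ?z \<inter> NB ?x \<noteq> {}" unfolding iz using jC by auto
          have h: "2 * card (NB ?z \<inter> NB ?x) = card (NB ?z)" using HP[OF zW zne zna ne] .
          have "card (NB ?z) = 2 * card (nbH E k)" using card_nb_U[OF kV st0] t2 by simp
          then show False using h iz dk cpos by simp
        qed
      qed
    qed
  qed
qed

end


context M begin

lemma root_fixed:
  assumes ns: "\<not> is_star V E" and he: "has_edge V E" and ni: "no_isolated V E"
    and aut: "automorphism W F f"
  shows "f Root = Root"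
proof (rule ccontr)
  assume ne: "f Root \<noteq> Root"
  have xW: "f Root \<in> W" using aut_in[OF aut W_Root] .
  obtain i s where x: "f Root = U i s" using ne by (cases "f Root") auto
  have iV: "i \<in> V" and st: "s \<le> t" using xW x by auto
  have degx: "card (NB (U i s)) = card V"
    using aut_card_nb[OF aut W_Root] card_nb_Root x by simp
  have hx: "half_prop W F (U i s)" using aut_half[OF aut W_Root half_Root] x by simp
  have ix: "indep_prop W F (U i s)" using aut_indep[OF aut W_Root indep_Root] x by simp
  have tW: "U i t \<in> W" using iV by simp
  have "U i t \<in> NB Root" using iV by (simp add: nb_Root)
  then have "f (U i t) \<in> f ` NB Root" by (rule imageI)
  then have fa: "f (U i t) \<in> NB (U i s)" unfolding aut_nb[OF aut W_Root] x .
  have dfa: "card (NB (f (U i t))) = card (nbH E i) + 1"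
    using aut_card_nb[OF aut tW] card_nb_U[OF iV] by simp
  show False
  proof (cases "s = t")
    case True
    have "card (nbH E i) + 1 = card V" using degx card_nb_U[OF iV st] True by simp
    then show False using top_case[OF ns he ni iV] hx True by simp
  next
    case False
    then have slt: "s < t" using st by simp
    have dV: "card V = 2 * card (nbH E i)" using degx card_nb_U[OF iV st] slt by simp
    have leaf: "\<And>j k. E i j \<Longrightarrow> E j k \<Longrightarrow> k = i"
      using low_step[OF ni iV slt hx ix] by blast
    have nx: "NB (U i s) = lay (s - 1) (nbH E i) \<union> lay (s + 1) (nbH E i)" using nb_U[OF iV st] slt by simp
    obtain j r where a: "f (U i t) = U j r" "E i j" "r \<le> t"
    proof -
      have m: "f (U i t) \<in> lay (s - 1) (nbH E i) \<union> lay (s + 1) (nbH E i)" using fa nx by simp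
      then obtain j r where "f (U i t) = U j r" "j \<in> nbH E i" "r = s - 1 \<or> r = s + 1"
        unfolding lay_def by blast
      moreover have "r \<le> t" using calculation(3) slt by auto
      ultimately show ?thesis using that by simp
    qed
    have jV: "j \<in> V" using a EV by auto
    have "nbH E j = {i}" using leaf a(2) Esym by auto
    then have "card (NB (U j r)) = 2" using card_nb_U[OF jV a(3)] by simp
    then have "card (nbH E i) = 1" using dfa a(1) by simp
    then have "card V = 2" using dV by simp
    then show False using card2_star[OF _ iV a(2)] ns by simp
  qed
qed

end


lemma det_finite: assumes "finite V" shows "finite {S. determining_set V E S}"
  by (rule finite_subset[of _ "Pow V"]) (auto simp: determining_set_def assms)

lemma det_self: "determining_set V E V"
  unfolding determining_set_def by auto

lemma det_le: assumes "finite V" "determining_set V E S" shows "determining_number V E \<le> card S"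
  unfolding determining_number_def using det_finite[OF assms(1)] assms(2) by (auto intro!: Min_le)

lemma det_ex: assumes "finite V" shows "\<exists>S. determining_set V E S \<and> card S = determining_number V E"
proof -
  have "determining_number V E \<in> card ` {S. determining_set V E S}"
    unfolding determining_number_def
    using det_finite[OF assms] det_self[of V E] by (intro Min_in) auto
  then show ?thesis by auto
qed

context M begin

lemma finW: "finite W"
proof -
  have "W = (\<lambda>(v, s). U v s) ` (V \<times> {..t}) \<union> {Root}" unfolding myc_V_def by auto
  then show ?thesis using finV by simp
qed

end

locale P = M +
  fixes l :: nat
  assumes he: "has_edge V E" and ni: "no_isolated V E" and ns: "\<not> is_star V E" and l1: "l \<ge> 1"
begin

abbreviation "PV \<equiv> pend_V V t l"
abbreviation "PE \<equiv> pend_E E t l"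
abbreviation "NP \<equiv> nb PV PE"

lemma PV_Inl[simp]: "Inl a \<in> PV \<longleftrightarrow> a \<in> W" unfolding pend_V_def by auto
lemma PV_Inr[simp]: "Inr k \<in> PV \<longleftrightarrow> k < l" unfolding pend_V_def by auto

lemma finPV: "finite PV" unfolding pend_V_def using finW by simp

lemma NP_Inr: "k < l \<Longrightarrow> NP (Inr k) = {Inl Root}"
proof (rule set_eqI)
  fix u assume "k < l"
  then show "u \<in> NP (Inr k) \<longleftrightarrow> u \<in> {Inl Root}" by (cases u) (auto simp: nb_def)
qed

lemma NP_Root: "NP (Inl Root) = Inl ` NB Root \<union> Inr ` {..<l}"
proof (rule set_eqI)
  fix u show "u \<in> NP (Inl Root) \<longleftrightarrow> u \<in> Inl ` NB Root \<union> Inr ` {..<l}"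
    by (cases u) (auto simp: nb_def)
qed

lemma NP_U: "NP (Inl (U k s)) = Inl ` NB (U k s)"
proof (rule set_eqI)
  fix u show "u \<in> NP (Inl (U k s)) \<longleftrightarrow> u \<in> Inl ` NB (U k s)"
    by (cases u) (auto simp: nb_def)
qed

lemma deg_Inr: "k < l \<Longrightarrow> card (NP (Inr k)) = 1" using NP_Inr by simp

lemma deg_Inl: assumes "a \<in> W" shows "card (NP (Inl a)) \<ge> 2"
proof (cases a)
  case (U k s)
  have kV: "k \<in> V" and st: "s \<le> t" using assms U by auto
  have p: "card (nbH E k) \<ge> 1" using nbH_pos[OF ni kV] .
  have "card (NP (Inl a)) = card (NB (U k s))" using U NP_U by (simp add: card_image)
  also have "\<dots> \<ge> 2" using card_nb_U[OF kV st] p by simp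
  finally show ?thesis .
next
  case Root
  have "card (NP (Inl a)) = card V + l"
    unfolding Root NP_Root nb_Root
    by (subst card_Un_disjoint) (auto simp: finV card_image)
  then show ?thesis using card_V2[OF he] by simp
qed

lemma autP_Inr: assumes "automorphism PV PE g" "k < l" shows "\<exists>m<l. g (Inr k) = Inr m"
proof -
  have kP: "Inr k \<in> PV" using assms by simp
  have gP: "g (Inr k) \<in> PV" using aut_in[OF assms(1) kP] .
  have d: "card (NP (g (Inr k))) = 1" using aut_card_nb[OF assms(1) kP] deg_Inr[OF assms(2)] by simp
  show ?thesis
  proof (cases "g (Inr k)")
    case (Inl a)
    then have "card (NP (g (Inr k))) \<ge> 2" using deg_Inl gP by simp
    then show ?thesis using d by simp
  next
    case (Inr m)
    then show ?thesis using gP by auto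
  qed
qed

lemma autP_Inl: assumes "automorphism PV PE g" "a \<in> W" shows "\<exists>b\<in>W. g (Inl a) = Inl b"
proof -
  have aP: "Inl a \<in> PV" using assms by simp
  have gP: "g (Inl a) \<in> PV" using aut_in[OF assms(1) aP] .
  have d: "card (NP (g (Inl a))) \<ge> 2" using aut_card_nb[OF assms(1) aP] deg_Inl[OF assms(2)] by simp
  show ?thesis
  proof (cases "g (Inl a)")
    case (Inl b)
    then show ?thesis using gP by auto
  next
    case (Inr m)
    then have "m < l" using gP by simp
    then have "card (NP (g (Inl a))) = 1" using Inr deg_Inr by simp
    then show ?thesis using d by simp
  qed
qed

definition restr :: "(('a myc_vertex + nat) \<Rightarrow> ('a myc_vertex + nat)) \<Rightarrow> 'a myc_vertex \<Rightarrow> 'a myc_vertex" where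
  "restr g a = projl (g (Inl a))"

lemma restr_eq: assumes "automorphism PV PE g" "a \<in> W" shows "g (Inl a) = Inl (restr g a)" "restr g a \<in> W"
  using autP_Inl[OF assms] unfolding restr_def by auto

lemma restr_aut: assumes g: "automorphism PV PE g" shows "automorphism W F (restr g)"
  unfolding automorphism_def bij_betw_def
proof (intro conjI ballI)
  show "inj_on (restr g) W"
  proof (rule inj_onI)
    fix a b assume "a \<in> W" "b \<in> W" "restr g a = restr g b"
    then have "g (Inl a) = g (Inl b)" using restr_eq[OF g] by metis
    moreover have "Inl a \<in> PV" "Inl b \<in> PV" using \<open>a \<in> W\<close> \<open>b \<in> W\<close> by simp_all
    ultimately have "(Inl a :: 'a myc_vertex + nat) = Inl b" by (rule inj_onD[OF aut_inj[OF g]])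
    then show "a = b" by simp
  qed
  show "restr g ` W = W"
  proof
    show "restr g ` W \<subseteq> W" using restr_eq(2)[OF g] by auto
    show "W \<subseteq> restr g ` W"
    proof
      fix b assume b: "b \<in> W"
      then obtain p where p: "p \<in> PV" "Inl b = g p" using aut_surj[OF g, of "Inl b"] by auto
      show "b \<in> restr g ` W"
      proof (cases p)
        case (Inl a)
        then have "a \<in> W" using p by simp
        moreover have "restr g a = b" using p Inl restr_eq[OF g \<open>a \<in> W\<close>] by simp
        ultimately show ?thesis by blast
      next
        case (Inr k)
        then have "k < l" using p by simp
        then obtain m where "g (Inr k) = Inr m" using autP_Inr[OF g] by blast
        then show ?thesis using p Inr by simp
      qed
    qed
  qed
  fix a b assume ab: "a \<in> W" "b \<in> W"
  have "PE (g (Inl a)) (g (Inl b)) = PE (Inl a) (Inl b)" using aut_edge[OF g] ab by simp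
  then show "F (restr g a) (restr g b) = F a b" using restr_eq(1)[OF g ab(1)] restr_eq(1)[OF g ab(2)] by simp
qed

lemma ext_aut:
  assumes f: "automorphism W F f" and p: "bij_betw p {..<l} {..<l}"
  shows "automorphism PV PE (map_sum f p)"
proof -
  have fR: "f Root = Root" using root_fixed[OF ns he ni f] .
  have fR2: "\<And>a. a \<in> W \<Longrightarrow> f a = Root \<longleftrightarrow> a = Root"
    using fR aut_inj[OF f] W_Root unfolding inj_on_def by metis
  have fin: "inj_on f W" "f ` W = W" using f unfolding automorphism_def bij_betw_def by auto
  have pin: "inj_on p {..<l}" "p ` {..<l} = {..<l}" using p unfolding bij_betw_def by auto
  have inj: "inj_on (map_sum f p) PV"
  proof (rule inj_onI)
    fix x y assume "x \<in> PV" "y \<in> PV" "map_sum f p x = map_sum f p y"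
    then show "x = y" using fin(1) pin(1) unfolding inj_on_def
      by (cases x; cases y) auto
  qed
  have img: "map_sum f p ` PV = PV"
  proof -
    have "map_sum f p ` PV = Inl ` (f ` W) \<union> Inr ` (p ` {..<l})"
      unfolding pend_V_def by (auto simp: image_Un image_image)
    then show ?thesis using fin(2) pin(2) unfolding pend_V_def by simp
  qed
  have edge: "\<forall>x\<in>PV. \<forall>y\<in>PV. PE (map_sum f p x) (map_sum f p y) = PE x y"
  proof (intro ballI)
    fix x y assume xy: "x \<in> PV" "y \<in> PV"
    show "PE (map_sum f p x) (map_sum f p y) = PE x y"
    proof (cases x)
      case (Inl a)
      then have a: "a \<in> W" using xy by simp
      show ?thesis
      proof (cases y)
        case (Inl b)
        then have "b \<in> W" using xy by simp
        then show ?thesis using aut_edge[OF f a] \<open>x = Inl a\<close> Inl by simp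
      next
        case (Inr k)
        then have "k < l" using xy by simp
        then have "p k < l" using pin(2) by auto
        then show ?thesis using \<open>x = Inl a\<close> Inr fR2[OF a] \<open>k < l\<close> by simp
      qed
    next
      case (Inr k)
      then have k: "k < l" using xy by simp
      then have pk: "p k < l" using pin(2) by auto
      show ?thesis
      proof (cases y)
        case (Inl b)
        then have b: "b \<in> W" using xy by simp
        then show ?thesis using Inr Inl fR2[OF b] k pk by simp
      next
        case (Inr j)
        then show ?thesis using \<open>x = Inr k\<close> by simp
      qed
    qed
  qed
  show ?thesis unfolding automorphism_def bij_betw_def using inj img edge by blast
qed

end


context P begin

lemma upper: "determining_number PV PE \<le> determining_number W F + (l - 1)"
proof -
  obtain S where S: "determining_set W F S" "card S = determining_number W F"
    using det_ex[OF finW] by blast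
  have SW: "S \<subseteq> W" using S(1) unfolding determining_set_def by simp
  define S' where "S' = Inl ` S \<union> Inr ` {..<l - 1}"
  have S'P: "S' \<subseteq> PV" unfolding S'_def using SW by auto
  have "determining_set PV PE S'"
    unfolding determining_set_def
  proof (intro conjI allI impI S'P)
    fix g assume ga: "automorphism PV PE g \<and> (\<forall>x\<in>S'. g x = x)"
    then have g: "automorphism PV PE g" and fx: "\<forall>x\<in>S'. g x = x" by auto
    have ra: "automorphism W F (restr g)" using restr_aut[OF g] .
    have "\<forall>a\<in>S. restr g a = a"
    proof
      fix a assume "a \<in> S"
      then have "g (Inl a) = Inl a" using fx unfolding S'_def by auto
      then show "restr g a = a" unfolding restr_def by simp
    qed
    then have rid: "\<forall>a\<in>W. restr g a = a" using S(1) ra unfolding determining_set_def by blast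
    have inl: "\<And>a. a \<in> W \<Longrightarrow> g (Inl a) = Inl a" using restr_eq(1)[OF g] rid by simp
    show "\<forall>x\<in>PV. g x = x"
    proof
      fix x assume xP: "x \<in> PV"
      show "g x = x"
      proof (cases x)
        case (Inl a)
        then show ?thesis using inl xP by simp
      next
        case (Inr k)
        then have k: "k < l" using xP by simp
        show ?thesis
        proof (cases "k < l - 1")
          case True
          then show ?thesis using fx Inr unfolding S'_def by auto
        next
          case False
          then have kl: "k = l - 1" using k by simp
          obtain m where m: "m < l" "g (Inr k) = Inr m" using autP_Inr[OF g k] by blast
          show ?thesis
          proof (cases "m < l - 1")
            case True
            then have "g (Inr m) = Inr m" using fx unfolding S'_def by auto
            then have "g (Inr m) = g (Inr k)" using m by simp
            moreover have "Inr m \<in> PV" "Inr k \<in> PV" using m k by simp_all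
            ultimately have "(Inr m :: 'a myc_vertex + nat) = Inr k" by (rule inj_onD[OF aut_inj[OF g]])
            then show ?thesis using True kl by simp
          next
            case False
            then have "m = k" using m(1) kl by simp
            then show ?thesis using m Inr by simp
          qed
        qed
      qed
    qed
  qed
  then have "determining_number PV PE \<le> card S'" using det_le[OF finPV] by blast
  also have "card S' = card S + (l - 1)"
    unfolding S'_def using SW finite_subset[OF SW finW]
    by (subst card_Un_disjoint) (auto simp: card_image)
  finally show ?thesis using S(2) by simp
qed

lemma lower: "determining_number W F + (l - 1) \<le> determining_number PV PE"
proof -
  obtain S' where S': "determining_set PV PE S'" "card S' = determining_number PV PE"
    using det_ex[OF finPV] by blast
  have S'P: "S' \<subseteq> PV" using S'(1) unfolding determining_set_def by simp
  define S where "S = {a. Inl a \<in> S'}"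
  define K where "K = {k. Inr k \<in> S'}"
  have S'eq: "S' = Inl ` S \<union> Inr ` K"
  proof (rule set_eqI)
    fix x show "x \<in> S' \<longleftrightarrow> x \<in> Inl ` S \<union> Inr ` K" unfolding S_def K_def by (cases x) auto
  qed
  have SW: "S \<subseteq> W" using S'P unfolding S_def by auto
  have Kl: "K \<subseteq> {..<l}" using S'P unfolding K_def by auto
  have fxs: "\<And>g. automorphism PV PE g \<Longrightarrow> (\<forall>x\<in>S'. g x = x) \<Longrightarrow> (\<forall>x\<in>PV. g x = x)"
    using S'(1) unfolding determining_set_def by blast
  have detS: "determining_set W F S"
    unfolding determining_set_def
  proof (intro conjI allI impI SW)
    fix f assume fa: "automorphism W F f \<and> (\<forall>x\<in>S. f x = x)"
    have bid: "bij_betw id {..<l} {..<l}" by simp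
    have ea: "automorphism PV PE (map_sum f id)" using ext_aut[OF _ bid] fa by blast
    have "\<forall>x\<in>S'. map_sum f id x = x"
    proof
      fix x assume "x \<in> S'"
      then show "map_sum f id x = x" using fa unfolding S'eq by auto
    qed
    then have "\<forall>x\<in>PV. map_sum f id x = x" using fxs[OF ea] by blast
    then show "\<forall>x\<in>W. f x = x" by (metis PV_Inl map_sum.simps(1) sum.inject(1))
  qed
  have c1: "determining_number W F \<le> card S" using det_le[OF finW detS] .
  have c2: "l - 1 \<le> card K"
  proof (rule ccontr)
    assume "\<not> l - 1 \<le> card K"
    then have lt: "card K + 2 \<le> l" by simp
    have "card ({..<l} - K) = l - card K" using Kl by (simp add: card_Diff_subset finite_subset)
    then have "card ({..<l} - K) \<ge> 2" using lt by simp
    then obtain a b where ab: "a \<in> {..<l} - K" "b \<in> {..<l} - K" "a \<noteq> b"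
      by (metis card_2_iff' card_le_Suc_iff numeral_2_eq_2 obtain_subset_with_card_n subset_iff)
    define p where "p = id(a := b, b := a)"
    have pb: "bij_betw p {..<l} {..<l}"
    proof (rule bij_betw_byWitness[where f'=p])
      show "\<forall>x\<in>{..<l}. p (p x) = x" unfolding p_def by auto
      show "\<forall>x\<in>{..<l}. p (p x) = x" unfolding p_def by auto
      show "p ` {..<l} \<subseteq> {..<l}" using ab unfolding p_def by auto
      show "p ` {..<l} \<subseteq> {..<l}" using ab unfolding p_def by auto
    qed
    have ea: "automorphism W F id" unfolding automorphism_def by simp
    have ep: "automorphism PV PE (map_sum id p)" using ext_aut[OF ea pb] .
    have "\<forall>x\<in>S'. map_sum id p x = x"
    proof
      fix x assume "x \<in> S'"
      then show "map_sum id p x = x" using ab unfolding S'eq p_def by auto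
    qed
    then have "\<forall>x\<in>PV. map_sum id p x = x" using fxs[OF ep] by blast
    moreover have "Inr a \<in> PV" using ab by simp
    ultimately have "map_sum id p (Inr a) = (Inr a :: 'a myc_vertex + nat)" by blast
    then have "Inr (p a) = (Inr a :: 'a myc_vertex + nat)" by simp
    then show False using ab unfolding p_def by simp
  qed
  have "card S' = card S + card K"
    unfolding S'eq using finite_subset[OF SW finW] finite_subset[OF Kl]
    by (subst card_Un_disjoint) (auto simp: card_image)
  then show ?thesis using c1 c2 S'(2) by simp
qed

end

theorem mainTheorem10:
  fixes V :: "'a set" and E :: "'a \<Rightarrow> 'a \<Rightarrow> bool" and t l :: nat
  assumes "graph V E"
    and "has_edge V E"
    and "no_isolated V E"
    and "\<not> is_star V E"
    and "t \<ge> 1"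
    and "l \<ge> 1"
  shows "determining_number (pend_V V t l) (pend_E E t l)
           = determining_number (myc_V V t) (myc_E E t) + l - 1"
proof -
  interpret P V E t l using assms by unfold_locales auto
  have "determining_number (pend_V V t l) (pend_E E t l) = determining_number (myc_V V t) (myc_E E t) + (l - 1)"
    using upper lower by (rule antisym)
  then show ?thesis using assms(6) by simp
qed

end
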